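(* Let $\psi\colon\mathbb R^2\to\mathbb R$ be smooth and $p_\ast\in\mathbb R^2$ be such that conditions 1–7 below hold with $N=2$. Let $\alpha,c>0$, $\varpi\in\mathbb N$, $U(\tau):=\alpha\sin(\varpi\tau)$, $v(\tau):=c\sin(\varpi\tau)$, and for $a\in\mathbb R$ define $\phi^a\colon\mathbb R^2\times\mathbb S^1\to\mathbb R$ by $\phi^a([p,o]):=\frac1{2\pi}\int_0^{2\pi}\int_0^1(1-s)\,U(\tau)^2v(\tau)\,\langle\nabla^2\psi(p+asU(\tau)o)o,o\rangle\,\mathrm ds\,\mathrm d\tau$. Then there exist $a_0',\kappa>0$ such that $|\phi^a(x)|\le\kappa|\nabla\psi(p)|$ for every $a\in[0,a_0']$ and every $x=[p,o]\in\mathbb R^2\times\mathbb S^1$.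
   Context: $\mathbb S^1$ is the unit circle in $\mathbb R^2$. Notation: $y_\ast:=\psi(p_\ast)$, $\underline y:=\inf\psi\in\mathbb R\cup\{-\infty\}$, $|\nabla^2\psi(p)|$ the operator norm of the Hessian, $\psi^{-1}(\ge y):=\{p:\psi(p)\ge y\}$. Conditions: (1) $\psi(p)<y_\ast$ for $p\ne p_\ast$; (2) $\nabla^2\psi(p_\ast)$ negative definite; (3) there is $r_1>0$ with $\psi(p_\ast+v)=\psi(p_\ast-v)$ for $|v|\le r_1$; (4) there is $c_1>0$ with $|\nabla^2\psi(p)|\le c_1$ for all $p$; (5) $\nabla\psi(p)\ne0$ for $p\ne p_\ast$; (6) for every $y\in(\underline y,y_\ast)$, $\psi^{-1}(\ge y)$ is compact; (7) there are $c_2,r_2,r_3>0$ with $|\nabla^2\psi(p+v)|\le c_2|\nabla\psi(p)|$ for all $|p-p_\ast|\ge r_2$, $|v|\le r_3$. *)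

theory Defs
  imports "HOL-Analysis.Analysis"
begin

text \<open>Smoothness (C-infinity) on the plane: there is a family of iterated partial
derivatives, indexed by lists of coordinate directions, each of which is
(Frechet) differentiable everywhere with the next ones as partial derivatives.\<close>
definition smooth2 :: "(real^2 \<Rightarrow> real) \<Rightarrow> bool" where
  "smooth2 f \<longleftrightarrow> (\<exists>d :: 2 list \<Rightarrow> real^2 \<Rightarrow> real.
      d [] = f \<and>
      (\<forall>l p. (d l has_derivative (\<lambda>v. \<Sum>i\<in>UNIV. v$i * d (i # l) p)) (at p)))"

definition grad :: "(real^2 \<Rightarrow> real) \<Rightarrow> real^2 \<Rightarrow> real^2" where
  "grad f p = (THE g. (f has_derivative (\<lambda>v. g \<bullet> v)) (at p))"

definition hess :: "(real^2 \<Rightarrow> real) \<Rightarrow> real^2 \<Rightarrow> real^2^2" where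
  "hess f p = (THE H. (grad f has_derivative (\<lambda>v. H *v v)) (at p))"

definition hess_norm :: "(real^2 \<Rightarrow> real) \<Rightarrow> real^2 \<Rightarrow> real" where
  "hess_norm f p = onorm (\<lambda>v. hess f p *v v)"

definition phi :: "(real^2 \<Rightarrow> real) \<Rightarrow> real \<Rightarrow> real \<Rightarrow> nat \<Rightarrow> real \<Rightarrow> real^2 \<Rightarrow> real^2 \<Rightarrow> real" where
  "phi \<psi> \<alpha> c w a p u =
     (1 / (2 * pi)) * integral {0..2*pi} (\<lambda>\<tau>. integral {0..1} (\<lambda>s.
        (1 - s) * (\<alpha> * sin (real w * \<tau>))\<^sup>2 * (c * sin (real w * \<tau>)) *
        ((hess \<psi> (p + (a * s * (\<alpha> * sin (real w * \<tau>))) *\<^sub>R u) *v u) \<bullet> u)))"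

end

theory Submission
  imports Defs
begin

lemma vec_deriv:
  fixes G :: "real^2 \<Rightarrow> real^2" and M :: "real^2^2"
  assumes "\<And>i. ((\<lambda>x. G x $ i) has_derivative (\<lambda>v. (M *v v) $ i)) (at p)"
  shows "(G has_derivative (\<lambda>v. M *v v)) (at p)"
proof (rule iffD2[OF has_derivative_componentwise_within], intro ballI)
  fix b :: "real^2" assume "b \<in> Basis"
  then obtain i where b: "b = axis i 1" unfolding Basis_vec_def by auto
  show "((\<lambda>x. G x \<bullet> b) has_derivative (\<lambda>x. (M *v x) \<bullet> b)) (at p)"
    unfolding b cart_eq_inner_axis[symmetric] by (rule assms)
qed

lemma grad_eq:
  assumes "(f has_derivative (\<lambda>v. g \<bullet> v)) (at p)"
  shows "grad f p = g"
proof -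
  have "\<And>g'. (f has_derivative (\<lambda>v. g' \<bullet> v)) (at p) \<Longrightarrow> g' = g"
  proof -
    fix g' assume "(f has_derivative (\<lambda>v. g' \<bullet> v)) (at p)"
    from has_derivative_unique[OF this assms] have "\<And>v. g' \<bullet> v = g \<bullet> v" by metis
    then have "(g' - g) \<bullet> (g' - g) = 0" by (simp add: inner_diff_left)
    then show "g' = g" by simp
  qed
  then show ?thesis unfolding grad_def using assms by (rule the_equality[rotated])
qed

lemma hess_eq:
  assumes "(grad f has_derivative (\<lambda>v. H *v v)) (at p)"
  shows "hess f p = H"
proof -
  have "\<And>H'. (grad f has_derivative (\<lambda>v. H' *v v)) (at p) \<Longrightarrow> H' = H"
  proof -
    fix H' assume "(grad f has_derivative (\<lambda>v. H' *v v)) (at p)"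
    from has_derivative_unique[OF this assms] have "\<And>v. H' *v v = H *v v" by metis
    then show "H' = H" by (simp add: matrix_eq)
  qed
  then show ?thesis unfolding hess_def using assms by (rule the_equality[rotated])
qed

lemma quad_form: "((A::real^2^2) *v u) \<bullet> u = (\<Sum>i\<in>UNIV. \<Sum>j\<in>UNIV. A$i$j * u$j * u$i)"
  by (simp add: inner_vec_def matrix_vector_mult_def sum_distrib_right)

lemma smooth_facts:
  assumes "smooth2 \<psi>"
  obtains d :: "2 list \<Rightarrow> real^2 \<Rightarrow> real" where
    "d [] = \<psi>"
    "\<And>l p. (d l has_derivative (\<lambda>v. \<Sum>i\<in>UNIV. v$i * d (i # l) p)) (at p)"
    "\<And>p. grad \<psi> p = (\<chi> i. d [i] p)"
    "\<And>p. hess \<psi> p = (\<chi> i j. d [j,i] p)"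
    "\<And>l. continuous_on UNIV (d l)"
    "\<And>p. (grad \<psi> has_derivative (\<lambda>v. hess \<psi> p *v v)) (at p)"
proof -
  from assms obtain d :: "2 list \<Rightarrow> real^2 \<Rightarrow> real" where d0: "d [] = \<psi>" and
    dd: "\<And>l p. (d l has_derivative (\<lambda>v. \<Sum>i\<in>UNIV. v$i * d (i # l) p)) (at p)"
    unfolding smooth2_def by blast
  have g: "grad \<psi> p = (\<chi> i. d [i] p)" for p
    apply (rule grad_eq)
    using dd[of "[]" p] d0 by (simp add: inner_vec_def mult.commute)
  have gd: "(grad \<psi> has_derivative (\<lambda>v. (\<chi> i j. d [j,i] p) *v v)) (at p)" for p
    unfolding g[abs_def]
    apply (rule vec_deriv)
    using dd by (simp add: matrix_vector_mult_def mult.commute)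
  then have h: "hess \<psi> p = (\<chi> i j. d [j,i] p)" for p by (rule hess_eq)
  have dc: "continuous_on UNIV (d l)" for l
    using dd[of l] has_derivative_continuous continuous_at_imp_continuous_on by blast
  have gh: "(grad \<psi> has_derivative (\<lambda>v. hess \<psi> p *v v)) (at p)" for p
    using gd h by simp
  show ?thesis by (rule that[OF d0 dd g h dc gh])
qed


lemma sym_deriv:
  fixes f :: "real^2 \<Rightarrow> real" and D :: "2 \<Rightarrow> real^2 \<Rightarrow> real"
  assumes df: "\<And>q. (f has_derivative (\<lambda>v. \<Sum>i\<in>UNIV. v$i * D i q)) (at q)"
    and sym: "\<And>q. q \<in> ball z r \<Longrightarrow> f q = s * f (2 *\<^sub>R z - q)"
    and q: "q \<in> ball z r"
  shows "D k q = - s * D k (2 *\<^sub>R z - q)"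
proof -
  have r: "((\<lambda>x. 2 *\<^sub>R z - x) has_derivative (\<lambda>v. - v)) (at q)"
    by (auto intro!: derivative_eq_intros)
  have d1: "((\<lambda>x. f (2 *\<^sub>R z - x)) has_derivative (\<lambda>v. \<Sum>i\<in>UNIV. (-v)$i * D i (2 *\<^sub>R z - q))) (at q)"
    using has_derivative_compose[OF r df] by simp
  have d2: "((\<lambda>x. s * f (2 *\<^sub>R z - x)) has_derivative (\<lambda>v. s * (\<Sum>i\<in>UNIV. (-v)$i * D i (2 *\<^sub>R z - q)))) (at q)"
    by (rule has_derivative_mult_right[OF d1])
  have d3: "(f has_derivative (\<lambda>v. s * (\<Sum>i\<in>UNIV. (-v)$i * D i (2 *\<^sub>R z - q)))) (at q)"
    by (rule has_derivative_transform_within_open[OF d2 open_ball q]) (simp add: sym)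
  from has_derivative_unique[OF df d3]
  have "(\<Sum>i\<in>UNIV. (axis k 1)$i * D i q) = s * (\<Sum>i\<in>UNIV. (-(axis k 1))$i * D i (2 *\<^sub>R z - q))"
    by metis
  then show ?thesis using exhaust_2[of k] by (auto simp: sum_2 axis_def)
qed

lemma lip:
  fixes f :: "real^2 \<Rightarrow> real" and D :: "2 \<Rightarrow> real^2 \<Rightarrow> real"
  assumes df: "\<And>q. (f has_derivative (\<lambda>v. \<Sum>i\<in>UNIV. v$i * D i q)) (at q)"
   and cD: "\<And>i. continuous_on UNIV (D i)"
   and S: "compact S" "convex S"
  shows "\<exists>L. \<forall>x\<in>S. \<forall>y\<in>S. \<bar>f x - f y\<bar> \<le> L * norm (x - y)"
proof -
  have "continuous_on S (\<lambda>q. \<Sum>i\<in>UNIV. \<bar>D i q\<bar>)"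
    by (intro continuous_intros continuous_on_subset[OF cD]) auto
  then have cmp: "compact ((\<lambda>q. \<Sum>i\<in>UNIV. \<bar>D i q\<bar>) ` S)"
    using S(1) by (rule compact_continuous_image)
  obtain M where M0: "\<forall>x\<in>(\<lambda>q. \<Sum>i\<in>UNIV. \<bar>D i q\<bar>) ` S. norm x \<le> M"
    using compact_imp_bounded[OF cmp] unfolding bounded_iff by blast
  have M: "norm (\<Sum>i\<in>UNIV. \<bar>D i q\<bar>) \<le> M" if "q \<in> S" for q
    using M0 that by blast
  have on: "onorm (\<lambda>v. \<Sum>i\<in>UNIV. v$i * D i q) \<le> M" if q: "q \<in> S" for q
  proof (rule onorm_le)
    fix v :: "real^2"
    have "norm (\<Sum>i\<in>UNIV. v$i * D i q) \<le> (\<Sum>i\<in>UNIV. \<bar>v$i * D i q\<bar>)"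
      by (metis real_norm_def sum_abs)
    also have "\<dots> \<le> (\<Sum>i\<in>UNIV. norm v * \<bar>D i q\<bar>)"
      by (intro sum_mono) (simp add: abs_mult mult_right_mono component_le_norm_cart)
    also have "\<dots> = norm v * (\<Sum>i\<in>UNIV. \<bar>D i q\<bar>)" by (simp add: sum_distrib_left)
    also have "\<dots> \<le> norm v * M" using M[OF q] by (intro mult_left_mono) auto
    finally show "norm (\<Sum>i\<in>UNIV. v$i * D i q) \<le> M * norm v" by (simp add: mult.commute)
  qed
  show ?thesis
  proof (intro exI ballI)
    fix x y assume "x \<in> S" "y \<in> S"
    from differentiable_bound[OF S(2) has_derivative_at_withinI[OF df] on this]
    show "\<bar>f x - f y\<bar> \<le> M * norm (x - y)" by simp
  qed
qed

lemma quad_scale: "((H::real^2^2) *v (c *\<^sub>R v)) \<bullet> (c *\<^sub>R v) = c^2 * ((H *v v) \<bullet> v)"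
  by (simp add: matrix_vector_mult_scaleR power2_eq_square)

lemma grad_lower:
  fixes G :: "real^2 \<Rightarrow> real^2" and H :: "real^2^2"
  assumes dG: "(G has_derivative (\<lambda>v. H *v v)) (at z)" and G0: "G z = 0"
   and neg: "\<And>v. v \<noteq> 0 \<Longrightarrow> (H *v v) \<bullet> v < 0"
  shows "\<exists>l>0. \<exists>\<delta>>0. \<forall>p. norm (p - z) < \<delta> \<longrightarrow> l * norm (p - z) \<le> norm (G p)"
proof -
  have "continuous_on (sphere 0 1) (\<lambda>v. (H *v v) \<bullet> v)"
    unfolding quad_form by (intro continuous_intros)
  moreover have "sphere (0::real^2) 1 \<noteq> {}" by simp
  ultimately obtain v0 where v0: "v0 \<in> sphere (0::real^2) 1" and mx: "\<And>y. y \<in> sphere 0 1 \<Longrightarrow> (H *v y) \<bullet> y \<le> (H *v v0) \<bullet> v0"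
    using continuous_attains_sup[OF compact_sphere] by blast
  define m where "m = - ((H *v v0) \<bullet> v0)"
  have "v0 \<noteq> 0" using v0 by auto
  then have m: "m > 0" using neg[of v0] unfolding m_def by auto
  have Hv: "m * norm v \<le> norm (H *v v)" for v
  proof (cases "v = 0")
    case True then show ?thesis by simp
  next
    case False
    define e where "e = v /\<^sub>R norm v"
    have e: "e \<in> sphere 0 1" using False by (simp add: e_def)
    have ve: "v = norm v *\<^sub>R e" using False by (simp add: e_def)
    have "(H *v v) \<bullet> v = (H *v (norm v *\<^sub>R e)) \<bullet> (norm v *\<^sub>R e)"
      by (simp only: ve[symmetric])
    also have "\<dots> = (norm v)^2 * ((H *v e) \<bullet> e)" by (rule quad_scale)
    also have "\<dots> \<le> (norm v)^2 * (-m)" using mx[OF e] unfolding m_def by (intro mult_left_mono) auto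
    finally have "m * (norm v)^2 \<le> - ((H *v v) \<bullet> v)" using mult.commute[of m "(norm v)^2"] by linarith
    also have "\<dots> \<le> norm (H *v v) * norm v"
      using Cauchy_Schwarz_ineq2[of "H *v v" v] by simp
    finally have "(m * norm v) * norm v \<le> norm (H *v v) * norm v" by (simp add: power2_eq_square mult.assoc)
    moreover have "norm v > 0" using False by simp
    ultimately show ?thesis by (rule mult_right_le_imp_le)
  qed
  have "\<forall>e>0. \<exists>d>0. \<forall>y. norm (y - z) < d \<longrightarrow> norm (G y - G z - H *v (y - z)) \<le> e * norm (y - z)"
    using dG unfolding has_derivative_at_alt by blast
  moreover have "m/2 > 0" using m by simp
  ultimately obtain \<delta> where \<delta>: "\<delta> > 0"
    and d: "\<And>y. norm (y - z) < \<delta> \<Longrightarrow> norm (G y - G z - H *v (y - z)) \<le> (m/2) * norm (y - z)"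
    by blast
  show ?thesis
  proof (intro exI conjI allI impI)
    show "m/2 > 0" using m by simp
    show "\<delta> > 0" by fact
    fix p assume "norm (p - z) < \<delta>"
    from d[OF this] G0 have "norm (G p - H *v (p - z)) \<le> (m/2) * norm (p - z)" by simp
    moreover have "m * norm (p - z) \<le> norm (H *v (p - z))" by (rule Hv)
    moreover have "norm (H *v (p - z)) \<le> norm (G p) + norm (G p - H *v (p - z))"
      using norm_triangle_ineq4[of "G p" "G p - H *v (p - z)"] by simp
    moreover have "(m/2) * norm (p - z) = m * norm (p - z) - (m/2) * norm (p - z)" by simp
    ultimately show "m/2 * norm (p - z) \<le> norm (G p)" by linarith
  qed
qed

lemma annulus:
  fixes G :: "real^2 \<Rightarrow> real^2"
  assumes "continuous_on S G" "compact S" "\<And>p. p \<in> S \<Longrightarrow> G p \<noteq> 0"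
  shows "\<exists>K. \<forall>p\<in>S. 1 \<le> K * norm (G p)"
proof -
  have "continuous_on S (\<lambda>p. inverse (norm (G p)))"
    using assms by (intro continuous_intros) auto
  then have cmp: "compact ((\<lambda>p. inverse (norm (G p))) ` S)"
    using assms(2) by (rule compact_continuous_image)
  obtain K where K0: "\<forall>x\<in>(\<lambda>p. inverse (norm (G p))) ` S. norm x \<le> K"
    using compact_imp_bounded[OF cmp] unfolding bounded_iff by blast
  have K: "norm (inverse (norm (G p))) \<le> K" if "p \<in> S" for p
    using K0 that by blast
  show ?thesis
  proof (intro exI ballI)
    fix p assume p: "p \<in> S"
    have "1 = inverse (norm (G p)) * norm (G p)" using assms(3)[OF p] by simp
    also have "\<dots> \<le> K * norm (G p)" using K[OF p] by (intro mult_right_mono) auto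
    finally show "1 \<le> K * norm (G p)" .
  qed
qed

lemma quad_onorm:
  assumes "norm u = 1"
  shows "\<bar>((A::real^2^2) *v u) \<bullet> u\<bar> \<le> onorm (\<lambda>v. A *v v)"
proof -
  have "\<bar>(A *v u) \<bullet> u\<bar> \<le> norm (A *v u) * norm u" by (rule Cauchy_Schwarz_ineq2)
  also have "\<dots> = norm (A *v u)" using assms by simp
  also have "\<dots> \<le> onorm (\<lambda>v. A *v v) * norm u" by (rule onorm[OF matrix_vector_mul_bounded_linear])
  finally show ?thesis using assms by simp
qed



lemma reflect_T:
  fixes f :: "real \<Rightarrow> real"
  shows "integral {0..T} (\<lambda>t. f (T - t)) = integral {0..T} f"
    and "(\<lambda>t. f (T - t)) integrable_on {0..T} \<longleftrightarrow> f integrable_on {0..T}"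
proof -
  have "integral {0..T} (\<lambda>t. f (T - t)) = integral {-T..-0} (\<lambda>x. f (T - (- x)))"
    using Henstock_Kurzweil_Integration.integral_reflect_real[where a=0 and b=T and f="\<lambda>t. f (T - t)"] by simp
  also have "\<dots> = integral {0-T..T-T} (\<lambda>x. f (x + T))" by (simp add: add.commute)
  also have "\<dots> = integral {0..T} f" by (rule integral_shift_real_ivl)
  finally show "integral {0..T} (\<lambda>t. f (T - t)) = integral {0..T} f" .
  have "(\<lambda>t. f (T - t)) integrable_on {0..T} \<longleftrightarrow> (\<lambda>x. f (T - (- x))) integrable_on {-T..-0}"
    using Henstock_Kurzweil_Integration.integrable_reflect_real[where a=0 and b=T and f="\<lambda>t. f (T - t)"] by simp
  also have "\<dots> \<longleftrightarrow> (\<lambda>x. f (x + T)) integrable_on {0-T..T-T}" by (simp add: add.commute)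
  also have "\<dots> \<longleftrightarrow> f integrable_on {0..T}" by (rule integrable_shift_real_ivl_iff)
  finally show "(\<lambda>t. f (T - t)) integrable_on {0..T} \<longleftrightarrow> f integrable_on {0..T}" .
qed

lemma sin_reflect: "sin (real w * (2*pi - t)) = - sin (real w * t)"
proof -
  have "real w * (2*pi - t) = real (2*w) * pi - real w * t" by (simp add: algebra_simps)
  then show ?thesis by (simp add: sin_diff)
qed

lemma phi_bound:
  fixes \<psi> :: "real^2 \<Rightarrow> real" and u p :: "real^2"
  assumes cont: "continuous_on UNIV (\<lambda>q. (hess \<psi> q *v u) \<bullet> u)"
    and nu: "norm u = 1" and a: "a \<ge> 0" and \<alpha>: "\<alpha> > 0" and c: "c > 0"
    and B: "\<And>y. norm y \<le> a*\<alpha> \<Longrightarrow> \<bar>(hess \<psi> (p+y) *v u) \<bullet> u - (hess \<psi> (p-y) *v u) \<bullet> u\<bar> \<le> B"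
  shows "\<bar>phi \<psi> \<alpha> c w a p u\<bar> \<le> \<alpha>^2 * c * B"
proof -
  define h where "h y = (hess \<psi> (p + y) *v u) \<bullet> u" for y
  have hc: "continuous_on UNIV h" unfolding h_def
    by (rule continuous_on_compose2[OF cont]) (auto intro!: continuous_intros)
  define F where "F x = integral {0..1} (\<lambda>s. (1-s) * h ((a * s * (\<alpha> * x)) *\<^sub>R u))" for x
  define k where "k x = (\<alpha>*x)^2 * (c*x) * F x" for x
  have inner: "integral {0..1} (\<lambda>s. (1 - s) * (\<alpha> * sin (real w * \<tau>))\<^sup>2 * (c * sin (real w * \<tau>)) *
        ((hess \<psi> (p + (a * s * (\<alpha> * sin (real w * \<tau>))) *\<^sub>R u) *v u) \<bullet> u)) = k (sin (real w * \<tau>))" for \<tau>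
  proof -
    have "integral {0..1} (\<lambda>s. (1 - s) * (\<alpha> * sin (real w * \<tau>))\<^sup>2 * (c * sin (real w * \<tau>)) *
        ((hess \<psi> (p + (a * s * (\<alpha> * sin (real w * \<tau>))) *\<^sub>R u) *v u) \<bullet> u))
      = integral {0..1} (\<lambda>s. ((\<alpha> * sin (real w * \<tau>))\<^sup>2 * (c * sin (real w * \<tau>))) *
            ((1-s) * h ((a * s * (\<alpha> * sin (real w * \<tau>))) *\<^sub>R u)))"
      by (rule integral_cong) (simp add: h_def)
    also have "\<dots> = k (sin (real w * \<tau>))" unfolding k_def F_def by simp
    finally show ?thesis .
  qed
  have phi_eq: "phi \<psi> \<alpha> c w a p u = 1/(2*pi) * integral {0..2*pi} (\<lambda>\<tau>. k (sin (real w * \<tau>)))"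
    unfolding phi_def inner ..
  have B0: "B \<ge> 0" using B[of 0] \<alpha> a by simp
  have Bk: "\<bar>k x + k (-x)\<bar> \<le> \<alpha>^2*c*B" if x: "\<bar>x\<bar> \<le> 1" for x
  proof -
    have ci: "continuous_on {0..1} (\<lambda>s. (1-s) * h ((a * s * (\<alpha> * z)) *\<^sub>R u))" for z
      by (intro continuous_intros continuous_on_compose2[OF hc]) auto
    have int: "(\<lambda>s. (1-s) * h ((a * s * (\<alpha> * z)) *\<^sub>R u)) integrable_on {0..1}" for z
      by (rule integrable_continuous_real[OF ci])
    have "F x - F (-x) = integral {0..1} (\<lambda>s. (1-s) * h ((a * s * (\<alpha> * x)) *\<^sub>R u) - (1-s) * h ((a * s * (\<alpha> * (-x))) *\<^sub>R u))"
      unfolding F_def by (rule integral_diff[OF int int, symmetric])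
    also have "\<bar>\<dots>\<bar> \<le> integral {0..1} (\<lambda>s::real. B)"
    proof -
      have "norm (integral {0..1} (\<lambda>s. (1-s) * h ((a * s * (\<alpha> * x)) *\<^sub>R u) - (1-s) * h ((a * s * (\<alpha> * (-x))) *\<^sub>R u)))
          \<le> integral {0..1} (\<lambda>s::real. B)"
      proof (rule Henstock_Kurzweil_Integration.integral_norm_bound_integral)
        show "(\<lambda>s. (1-s) * h ((a * s * (\<alpha> * x)) *\<^sub>R u) - (1-s) * h ((a * s * (\<alpha> * (-x))) *\<^sub>R u)) integrable_on {0..1}"
          by (rule integrable_diff[OF int int])
        show "(\<lambda>s::real. B) integrable_on {0..1}" by (rule integrable_const_ivl)
        fix s :: real assume s: "s \<in> {0..1}"
        define y where "y = (a * s * (\<alpha> * x)) *\<^sub>R u"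
        have ny: "norm y \<le> a*\<alpha>"
        proof -
          have "norm y = a * s * \<alpha> * \<bar>x\<bar>" using s a \<alpha> nu by (simp add: y_def abs_mult)
          also have "\<dots> \<le> a * 1 * \<alpha> * 1" using s a \<alpha> x by (intro mult_mono) auto
          finally show ?thesis by simp
        qed
        have "(a * s * (\<alpha> * (-x))) *\<^sub>R u = - y" by (simp add: y_def)
        then have "norm ((1-s) * h ((a * s * (\<alpha> * x)) *\<^sub>R u) - (1-s) * h ((a * s * (\<alpha> * (-x))) *\<^sub>R u))
              = \<bar>1-s\<bar> * \<bar>h y - h (-y)\<bar>"
          by (simp add: y_def abs_mult right_diff_distrib[symmetric])
        also have "\<dots> \<le> 1 * B"
          using B[OF ny] s by (intro mult_mono) (auto simp: h_def)
        finally show "norm ((1-s) * h ((a * s * (\<alpha> * x)) *\<^sub>R u) - (1-s) * h ((a * s * (\<alpha> * (-x))) *\<^sub>R u)) \<le> B" by simp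
      qed
      then show ?thesis by simp
    qed
    also have "\<dots> = B" by simp
    finally have FB: "\<bar>F x - F (-x)\<bar> \<le> B" .
    have "k x + k (-x) = \<alpha>^2 * c * (x^3 * (F x - F (-x)))"
      unfolding k_def by (simp add: power2_eq_square power3_eq_cube algebra_simps)
    also have "\<bar>\<dots>\<bar> = \<alpha>^2 * c * (\<bar>x\<bar>^3 * \<bar>F x - F (-x)\<bar>)"
      using c by (simp add: abs_mult power_abs)
    also have "\<dots> \<le> \<alpha>^2 * c * (1 * B)"
      using c x FB by (intro mult_left_mono mult_mono) (auto simp: power_le_one)
    finally show ?thesis by simp
  qed
  show ?thesis
  proof (cases "(\<lambda>\<tau>. k (sin (real w * \<tau>))) integrable_on {0..2*pi}")
    case False
    then show ?thesis using B0 c by (simp add: phi_eq not_integrable_integral)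
  next
    case True
    let ?f = "\<lambda>\<tau>. k (sin (real w * \<tau>))"
    have e: "(\<lambda>t. ?f (2*pi - t)) = (\<lambda>\<tau>. k (- sin (real w * \<tau>)))"
      by (simp add: sin_reflect)
    have I2: "integral {0..2*pi} ?f = integral {0..2*pi} (\<lambda>\<tau>. k (- sin (real w * \<tau>)))"
      using reflect_T(1)[where f="?f" and T="2*pi"] e by simp
    have T2: "(\<lambda>\<tau>. k (- sin (real w * \<tau>))) integrable_on {0..2*pi}"
      using reflect_T(2)[where f="?f" and T="2*pi"] e True by simp
    have "2 * integral {0..2*pi} ?f = integral {0..2*pi} (\<lambda>\<tau>. k (sin (real w * \<tau>)) + k (- sin (real w * \<tau>)))"
      using integral_add[OF True T2] I2 by simp
    also have "\<bar>\<dots>\<bar> \<le> integral {0..2*pi} (\<lambda>\<tau>. \<alpha>^2*c*B)"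
    proof -
      have "norm (integral {0..2*pi} (\<lambda>\<tau>. k (sin (real w * \<tau>)) + k (- sin (real w * \<tau>)))) \<le> integral {0..2*pi} (\<lambda>\<tau>. \<alpha>^2*c*B)"
        by (rule Henstock_Kurzweil_Integration.integral_norm_bound_integral) (auto intro!: integrable_add True T2 Bk)
      then show ?thesis by simp
    qed
    also have "\<dots> = 2*pi*(\<alpha>^2*c*B)" by simp
    finally have "\<bar>integral {0..2*pi} ?f\<bar> \<le> pi*(\<alpha>^2*c*B)" by simp
    then have "\<bar>integral {0..2*pi} ?f\<bar> / (2*pi) \<le> (pi*(\<alpha>^2*c*B)) / (2*pi)"
      by (intro divide_right_mono) auto
    moreover have "\<bar>phi \<psi> \<alpha> c w a p u\<bar> = \<bar>integral {0..2*pi} ?f\<bar> / (2*pi)"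
      unfolding phi_eq by (simp add: abs_mult)
    ultimately have "\<bar>phi \<psi> \<alpha> c w a p u\<bar> \<le> (pi*(\<alpha>^2*c*B)) / (2*pi)" by simp
    also have "\<dots> \<le> \<alpha>^2*c*B" using B0 c by (simp add: field_simps)
    finally show ?thesis .
  qed
qed


theorem lemma3:
  fixes \<psi> :: "real^2 \<Rightarrow> real" and pstar :: "real^2"
    and \<alpha> c :: real and w :: nat
  assumes smooth: "smooth2 \<psi>"
    and C1: "\<And>p. p \<noteq> pstar \<Longrightarrow> \<psi> p < \<psi> pstar"
    and C2: "\<And>v. v \<noteq> 0 \<Longrightarrow> (hess \<psi> pstar *v v) \<bullet> v < 0"
    and C3: "\<exists>r1>0. \<forall>v. norm v \<le> r1 \<longrightarrow> \<psi> (pstar + v) = \<psi> (pstar - v)"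
    and C4: "\<exists>c1>0. \<forall>p. hess_norm \<psi> p \<le> c1"
    and C5: "\<And>p. p \<noteq> pstar \<Longrightarrow> grad \<psi> p \<noteq> 0"
    and C6: "\<And>y. (\<exists>p. \<psi> p < y) \<Longrightarrow> y < \<psi> pstar \<Longrightarrow> compact {p. y \<le> \<psi> p}"
    and C7: "\<exists>c2>0. \<exists>r2>0. \<exists>r3>0. \<forall>p v. norm (p - pstar) \<ge> r2 \<and> norm v \<le> r3 \<longrightarrow>
               hess_norm \<psi> (p + v) \<le> c2 * norm (grad \<psi> p)"
    and \<alpha>pos: "\<alpha> > 0" and cpos: "c > 0"
  shows "\<exists>a0>0. \<exists>\<kappa>>0. \<forall>a\<in>{0..a0}. \<forall>p. \<forall>u\<in>sphere 0 1.
           \<bar>phi \<psi> \<alpha> c w a p u\<bar> \<le> \<kappa> * norm (grad \<psi> p)"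
proof -
  obtain d :: "2 list \<Rightarrow> real^2 \<Rightarrow> real" where d0: "d [] = \<psi>"
    and dd: "\<And>l p. (d l has_derivative (\<lambda>v. \<Sum>i\<in>UNIV. v$i * d (i # l) p)) (at p)"
    and gradf: "\<And>p. grad \<psi> p = (\<chi> i. d [i] p)"
    and hessf: "\<And>p. hess \<psi> p = (\<chi> i j. d [j,i] p)"
    and dcont: "\<And>l. continuous_on UNIV (d l)"
    and gder: "\<And>p. (grad \<psi> has_derivative (\<lambda>v. hess \<psi> p *v v)) (at p)"
    using smooth_facts[OF smooth] by blast
  from C3 obtain r1 where r1: "r1 > 0" and sym0: "\<And>v. norm v \<le> r1 \<Longrightarrow> \<psi> (pstar + v) = \<psi> (pstar - v)"
    by blast
  from C4 obtain c1 where c1: "c1 > 0" and hn: "\<And>p. hess_norm \<psi> p \<le> c1" by blast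
  from C7 obtain c2 r2 r3 where c2: "c2 > 0" and r2: "r2 > 0" and r3: "r3 > 0"
    and far: "\<And>p v. norm (p - pstar) \<ge> r2 \<Longrightarrow> norm v \<le> r3 \<Longrightarrow> hess_norm \<psi> (p + v) \<le> c2 * norm (grad \<psi> p)"
    by blast
  have Qhn: "\<bar>(hess \<psi> q *v u) \<bullet> u\<bar> \<le> hess_norm \<psi> q" if "norm u = 1" for q u
    unfolding hess_norm_def by (rule quad_onorm[OF that])
  have sym1: "d [] q = 1 * d [] (2 *\<^sub>R pstar - q)" if "q \<in> ball pstar r1" for q
  proof -
    have "norm (q - pstar) \<le> r1" using that by (simp add: dist_norm norm_minus_commute)
    from sym0[OF this] have "\<psi> (pstar + (q - pstar)) = \<psi> (pstar - (q - pstar))" .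
    moreover have "pstar - (q - pstar) = 2 *\<^sub>R pstar - q" by (simp add: algebra_simps scaleR_2)
    ultimately show ?thesis using d0 by simp
  qed
  have dsym1: "d [i] q = - 1 * d [i] (2 *\<^sub>R pstar - q)" if "q \<in> ball pstar r1" for i q
    using sym_deriv[where f="d []" and D="\<lambda>i. d [i]", OF dd sym1 that] by simp
  have dsym2: "d [j,i] q = d [j,i] (2 *\<^sub>R pstar - q)" if "q \<in> ball pstar r1" for i j q
    using sym_deriv[where f="d [i]" and D="\<lambda>j. d [j,i]", OF dd dsym1 that] by simp
  have hsym: "hess \<psi> q = hess \<psi> (2 *\<^sub>R pstar - q)" if "q \<in> ball pstar r1" for q
    unfolding hessf using dsym2[OF that] by (simp add: vec_eq_iff)
  have g0: "grad \<psi> pstar = 0"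
  proof -
    have "d [i] pstar = 0" for i
      using dsym1[of pstar i] r1 by (simp add: scaleR_2)
    then show ?thesis unfolding gradf by (simp add: vec_eq_iff)
  qed
  from grad_lower[OF gder g0 C2] obtain l \<delta>1 where l: "l > 0" and \<delta>1: "\<delta>1 > 0"
    and near: "\<And>p. norm (p - pstar) < \<delta>1 \<Longrightarrow> l * norm (p - pstar) \<le> norm (grad \<psi> p)"
    by blast
  define S where "S = cball pstar (r1/2)"
  have S: "compact S" "convex S" unfolding S_def by auto
  have Lex: "\<exists>L. \<forall>x\<in>S. \<forall>y\<in>S. \<bar>d [j,i] x - d [j,i] y\<bar> \<le> L * norm (x - y)" for i j
    by (rule lip[where D="\<lambda>k. d [k,j,i]", OF dd dcont S])
  obtain L11 L12 L21 L22 where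
    L11: "\<forall>x\<in>S. \<forall>y\<in>S. \<bar>d [1,1] x - d [1,1] y\<bar> \<le> L11 * norm (x - y)" and
    L12: "\<forall>x\<in>S. \<forall>y\<in>S. \<bar>d [1,2] x - d [1,2] y\<bar> \<le> L12 * norm (x - y)" and
    L21: "\<forall>x\<in>S. \<forall>y\<in>S. \<bar>d [2,1] x - d [2,1] y\<bar> \<le> L21 * norm (x - y)" and
    L22: "\<forall>x\<in>S. \<forall>y\<in>S. \<bar>d [2,2] x - d [2,2] y\<bar> \<le> L22 * norm (x - y)"
    using Lex[of 1 1] Lex[of 1 2] Lex[of 2 1] Lex[of 2 2] by blast
  define L where "L = \<bar>L11\<bar> + \<bar>L12\<bar> + \<bar>L21\<bar> + \<bar>L22\<bar>"
  have L0: "L \<ge> 0" unfolding L_def by simp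
  have Lall: "\<bar>d [j,i] x - d [j,i] y\<bar> \<le> L * norm (x - y)" if "x \<in> S" "y \<in> S" for i j x y
  proof -
    have "L11 * norm (x - y) \<le> L * norm (x - y)" "L12 * norm (x - y) \<le> L * norm (x - y)"
         "L21 * norm (x - y) \<le> L * norm (x - y)" "L22 * norm (x - y) \<le> L * norm (x - y)"
      unfolding L_def by (intro mult_right_mono; simp)+
    then show ?thesis using L11 L12 L21 L22 that exhaust_2[of i] exhaust_2[of j]
      by (smt (verit))
  qed
  have Qlip: "\<bar>(hess \<psi> x *v u) \<bullet> u - (hess \<psi> y *v u) \<bullet> u\<bar> \<le> 4 * L * norm (x - y)"
    if "x \<in> S" "y \<in> S" "norm u = 1" for x y u
  proof -
    define F where "F i j = (d [j,i] x - d [j,i] y) * u$j * u$i" for i j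
    have e: "(hess \<psi> x *v u) \<bullet> u - (hess \<psi> y *v u) \<bullet> u = (\<Sum>i\<in>UNIV. \<Sum>j\<in>UNIV. F i j)"
      unfolding quad_form hessf F_def by (simp add: sum_2 algebra_simps)
    have t: "\<bar>F i j\<bar> \<le> L * norm (x - y)" for i j
    proof -
      have "\<bar>F i j\<bar> = \<bar>d [j,i] x - d [j,i] y\<bar> * \<bar>u$j\<bar> * \<bar>u$i\<bar>" unfolding F_def by (simp add: abs_mult)
      also have "\<dots> \<le> (L * norm (x - y)) * 1 * 1"
        using Lall[OF that(1,2)] component_le_norm_cart[of u i] component_le_norm_cart[of u j] that(3) L0
        by (intro mult_mono) auto
      finally show ?thesis by simp
    qed
    have "\<bar>\<Sum>i\<in>UNIV. \<Sum>j\<in>UNIV. F i j\<bar> \<le> (\<Sum>i\<in>UNIV. \<Sum>j\<in>UNIV. \<bar>F i j\<bar>)"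
      by (rule order_trans[OF sum_abs], rule sum_mono, rule sum_abs)
    also have "\<dots> \<le> (\<Sum>i\<in>(UNIV::2 set). \<Sum>j\<in>(UNIV::2 set). L * norm (x - y))"
      by (intro sum_mono t)
    also have "\<dots> = 4 * L * norm (x - y)" by (simp add: sum_2)
    finally show ?thesis using e by simp
  qed
  define \<rho> where "\<rho> = min (r1/4) r3"
  have \<rho>: "\<rho> > 0" "\<rho> \<le> r1/4" "\<rho> \<le> r3" using r1 r3 unfolding \<rho>_def by auto
  define \<delta> where "\<delta> = min \<delta>1 (r1/4)"
  have \<delta>: "\<delta> > 0" "\<delta> \<le> \<delta>1" "\<delta> \<le> r1/4" using r1 \<delta>1 unfolding \<delta>_def by auto
  define S3 where "S3 = {p. \<delta> \<le> norm (p - pstar) \<and> norm (p - pstar) \<le> r2}"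
  have cS3: "compact S3"
  proof -
    have "S3 = cball pstar r2 \<inter> {p. \<delta> \<le> norm (p - pstar)}"
      unfolding S3_def by (auto simp: dist_norm norm_minus_commute)
    moreover have "closed {p. \<delta> \<le> norm (p - pstar)}"
      by (intro closed_Collect_le continuous_intros)
    ultimately show ?thesis by (simp add: compact_Int_closed)
  qed
  have gcont: "continuous_on UNIV (grad \<psi>)"
    using gder has_derivative_continuous continuous_at_imp_continuous_on by blast
  obtain K3 where K3: "\<And>p. p \<in> S3 \<Longrightarrow> 1 \<le> K3 * norm (grad \<psi> p)"
  proof -
    have "p \<in> S3 \<Longrightarrow> grad \<psi> p \<noteq> 0" for p
      using C5 \<delta> unfolding S3_def by force
    from annulus[OF continuous_on_subset[OF gcont] cS3 this] that show ?thesis by blast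
  qed
  define Kt where "Kt = 8 * L / l + 2 * c2 + 2 * c1 * \<bar>K3\<bar> + 1"
  have Kt_ge: "8 * L / l \<le> Kt" "2 * c2 \<le> Kt" "2 * c1 * \<bar>K3\<bar> \<le> Kt" "Kt > 0"
  proof -
    have "8 * L / l \<ge> 0" using L0 l by simp
    moreover have "2 * c1 * \<bar>K3\<bar> \<ge> 0" using c1 by simp
    ultimately show "8 * L / l \<le> Kt" "2 * c2 \<le> Kt" "2 * c1 * \<bar>K3\<bar> \<le> Kt" "Kt > 0"
      unfolding Kt_def using c2 by linarith+
  qed
  have key: "\<bar>(hess \<psi> (p+y) *v u) \<bullet> u - (hess \<psi> (p-y) *v u) \<bullet> u\<bar> \<le> Kt * norm (grad \<psi> p)"
    if u: "norm u = 1" and y: "norm y \<le> \<rho>" for p y u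
  proof (cases "norm (p - pstar) < \<delta>")
    case True
    have "p - y \<in> ball pstar r1"
    proof -
      have eq: "pstar - (p - y) = y - (p - pstar)" by (simp add: algebra_simps)
      have "norm (pstar - (p - y)) \<le> norm (p - pstar) + norm y"
        unfolding eq using norm_triangle_ineq4[of y "p - pstar"] by linarith
      then show ?thesis using True y \<rho> \<delta> by (simp add: dist_norm)
    qed
    from hsym[OF this] have h1: "hess \<psi> (p - y) = hess \<psi> (2 *\<^sub>R pstar - (p - y))" .
    have eq1: "(p + y) - pstar = (p - pstar) + y" by (simp add: algebra_simps)
    have n1: "norm ((p + y) - pstar) \<le> norm (p - pstar) + norm y"
      unfolding eq1 using norm_triangle_ineq[of "p - pstar" y] by linarith
    have n2: "norm ((2 *\<^sub>R pstar - (p - y)) - pstar) \<le> norm (p - pstar) + norm y"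
    proof -
      have eq2: "(2 *\<^sub>R pstar - (p - y)) - pstar = y - (p - pstar)" by (simp add: algebra_simps scaleR_2)
      show ?thesis unfolding eq2 using norm_triangle_ineq4[of y "p - pstar"] by linarith
    qed
    have inS: "p + y \<in> S" "2 *\<^sub>R pstar - (p - y) \<in> S"
      using n1 n2 True y \<rho> \<delta> unfolding S_def by (auto simp: dist_norm norm_minus_commute)
    have "(p + y) - (2 *\<^sub>R pstar - (p - y)) = 2 *\<^sub>R (p - pstar)" by (simp add: algebra_simps scaleR_2)
    then have nd: "norm ((p + y) - (2 *\<^sub>R pstar - (p - y))) = 2 * norm (p - pstar)" by simp
    have "\<bar>(hess \<psi> (p+y) *v u) \<bullet> u - (hess \<psi> (p-y) *v u) \<bullet> u\<bar> \<le> 4 * L * (2 * norm (p - pstar))"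
      using Qlip[OF inS u] h1 nd by simp
    also have "\<dots> = (8 * L / l) * (l * norm (p - pstar))" using l by simp
    also have "\<dots> \<le> (8 * L / l) * norm (grad \<psi> p)"
      using near[of p] True \<delta> L0 l by (intro mult_left_mono) auto
    also have "\<dots> \<le> Kt * norm (grad \<psi> p)" using Kt_ge by (intro mult_right_mono) auto
    finally show ?thesis .
  next
    case False
    have t: "\<bar>(hess \<psi> (p+y) *v u) \<bullet> u - (hess \<psi> (p-y) *v u) \<bullet> u\<bar>
        \<le> hess_norm \<psi> (p + y) + hess_norm \<psi> (p + (-y))"
      using Qhn[OF u, of "p+y"] Qhn[OF u, of "p-y"] by simp
    show ?thesis
    proof (cases "norm (p - pstar) \<ge> r2")
      case True
      have "hess_norm \<psi> (p + y) \<le> c2 * norm (grad \<psi> p)" "hess_norm \<psi> (p + (-y)) \<le> c2 * norm (grad \<psi> p)"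
        using far[OF True, of y] far[OF True, of "-y"] y \<rho> by auto
      with t have "\<bar>(hess \<psi> (p+y) *v u) \<bullet> u - (hess \<psi> (p-y) *v u) \<bullet> u\<bar> \<le> (2 * c2) * norm (grad \<psi> p)"
        by simp
      also have "\<dots> \<le> Kt * norm (grad \<psi> p)" using Kt_ge by (intro mult_right_mono) auto
      finally show ?thesis .
    next
      case False2: False
      have "p \<in> S3" using False False2 unfolding S3_def by auto
      from K3[OF this] have k: "1 \<le> \<bar>K3\<bar> * norm (grad \<psi> p)"
        by (smt (verit) mult_right_mono norm_ge_zero abs_ge_self)
      have "\<bar>(hess \<psi> (p+y) *v u) \<bullet> u - (hess \<psi> (p-y) *v u) \<bullet> u\<bar> \<le> 2 * c1"
        using t hn[of "p+y"] hn[of "p + (-y)"] by simp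
      also have "\<dots> \<le> 2 * c1 * (\<bar>K3\<bar> * norm (grad \<psi> p))" using c1 k by simp
      also have "\<dots> = (2 * c1 * \<bar>K3\<bar>) * norm (grad \<psi> p)" by simp
      also have "\<dots> \<le> Kt * norm (grad \<psi> p)" using Kt_ge by (intro mult_right_mono) auto
      finally show ?thesis .
    qed
  qed
  show ?thesis
  proof (intro exI conjI ballI allI)
    show "\<rho> / \<alpha> > 0" using \<rho> \<alpha>pos by simp
    show "\<alpha>^2 * c * Kt > 0" using \<alpha>pos cpos Kt_ge by simp
    fix a p u assume a: "a \<in> {0..\<rho>/\<alpha>}" and u: "u \<in> sphere (0::real^2) 1"
    have nu: "norm u = 1" using u by simp
    have a0: "a \<ge> 0" "a * \<alpha> \<le> \<rho>" using a \<alpha>pos by (auto simp: field_simps)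
    have cont: "continuous_on UNIV (\<lambda>q. (hess \<psi> q *v u) \<bullet> u)"
      unfolding quad_form hessf by (auto intro!: continuous_intros dcont)
    have "\<bar>phi \<psi> \<alpha> c w a p u\<bar> \<le> \<alpha>^2 * c * (Kt * norm (grad \<psi> p))"
      by (rule phi_bound[OF cont nu a0(1) \<alpha>pos cpos]) (use key[OF nu] a0 in auto)
    then show "\<bar>phi \<psi> \<alpha> c w a p u\<bar> \<le> \<alpha>^2 * c * Kt * norm (grad \<psi> p)" by (simp add: mult.assoc)
  qed
qed

end
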